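(* Let $a^*\in\mathbb{R}$, $\epsilon\ge0$ with $|a^*|-\epsilon>1$, $m\in\mathbb{N}$, $R\ge0$, $N:=2^R$. Let $\delta_+:=(|a^*|+\epsilon)^m-|a^*|^m$, $\delta_-:=|a^*|^m-(|a^*|-\epsilon)^m$, $M:=N^m$, and $$\kappa:=\frac1M\Big(|a^*|^m+\max\{\tfrac M2,1\}\delta_++\max\{\tfrac M2-1,0\}\delta_-\Big).$$ Then $\kappa^2<1$ (i.e. $\bar\kappa<1$ in the lossless case $p=0$) if and only if $$\frac{\delta_++\delta_-}{2}<1\quad\text{and}\quad R>\max\Big\{\log_2(|a^*|+\epsilon),\ \frac1m\log_2\frac{|a^*|^m-\delta_-}{1-(\delta_++\delta_-)/2}\Big\}.$$
   Context: In particular, if $m$ is so large that $(\delta_++\delta_-)/2\ge1$, no data rate $R$ achieves $\kappa<1$. *)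

theory Defs
  imports Complex_Main
begin

definition delta_plus :: "real \<Rightarrow> real \<Rightarrow> nat \<Rightarrow> real" where
  "delta_plus a e m = (\<bar>a\<bar> + e) ^ m - \<bar>a\<bar> ^ m"

definition delta_minus :: "real \<Rightarrow> real \<Rightarrow> nat \<Rightarrow> real" where
  "delta_minus a e m = \<bar>a\<bar> ^ m - (\<bar>a\<bar> - e) ^ m"

definition kappa :: "real \<Rightarrow> real \<Rightarrow> nat \<Rightarrow> real \<Rightarrow> real" where
  "kappa a e m R =
     (let M = (2 powr R) ^ m
      in (1 / M) * (\<bar>a\<bar> ^ m + max (M / 2) 1 * delta_plus a e m
                    + max (M / 2 - 1) 0 * delta_minus a e m))"

end

theory Submission
  imports Defs
begin

theorem mainTheorem10:
  fixes a e R :: real and m :: nat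
  assumes "e \<ge> 0" and "\<bar>a\<bar> - e > 1" and "m \<ge> 1" and "R \<ge> 0"
  shows "(kappa a e m R)\<^sup>2 < 1 \<longleftrightarrow>
     ((delta_plus a e m + delta_minus a e m) / 2 < 1 \<and>
      R > max (log 2 (\<bar>a\<bar> + e))
              ((1 / real m) * log 2 ((\<bar>a\<bar> ^ m - delta_minus a e m)
                 / (1 - (delta_plus a e m + delta_minus a e m) / 2))))"
proof -
  define A where "A = \<bar>a\<bar>"
  define b where "b = A - e"
  define c where "c = A + e"
  define P where "P = (2::real) powr R"
  define M where "M = P ^ m"
  define D where "D = (delta_plus a e m + delta_minus a e m) / 2"
  have b1: "b > 1" using assms by (simp add: b_def A_def)
  have bA: "b \<le> A" "A \<le> c" using assms by (auto simp: b_def c_def)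
  have dp: "delta_plus a e m = c^m - A^m" by (simp add: delta_plus_def c_def A_def)
  have dm: "delta_minus a e m = A^m - b^m" by (simp add: delta_minus_def b_def A_def)
  have bm: "b^m \<ge> 1" using b1 by (simp add: one_le_power)
  have bmA: "b^m \<le> A^m" "A^m \<le> c^m" using bA b1 by (auto intro!: power_mono)
  have D2: "2 * D = c^m - b^m" unfolding D_def dp dm by simp
  have P1: "P \<ge> 1" using assms(4) unfolding P_def by (metis ge_one_powr_ge_zero one_le_numeral)
  have M1: "M \<ge> 1" using P1 by (simp add: M_def one_le_power)
  have Mpow: "M = 2 powr (real m * R)" unfolding M_def P_def by (simp add: powr_power)
  have kap: "kappa a e m R = (1/M) * (A^m + max (M/2) 1 * delta_plus a e m
                    + max (M/2 - 1) 0 * delta_minus a e m)"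
    by (simp add: kappa_def M_def P_def A_def Let_def)
  have Am: "A^m \<ge> 0" using bmA bm by linarith
  have k0: "kappa a e m R \<ge> 0" unfolding kap using M1 bmA dp dm Am
    by (intro mult_nonneg_nonneg add_nonneg_nonneg) auto
  have sq: "(kappa a e m R)\<^sup>2 < 1 \<longleftrightarrow> kappa a e m R < 1"
    using k0 by (metis abs_of_nonneg abs_square_less_1)
  have L1: "log 2 c < R \<longleftrightarrow> c < P"
    using b1 bA by (subst log_less_iff) (auto simp: P_def)
  have cP: "c < P \<longleftrightarrow> c^m < M"
  proof
    assume "c < P" then show "c^m < M" unfolding M_def using b1 bA assms(3)
      by (intro power_strict_mono) auto
  next
    assume "c^m < M" then show "c < P" unfolding M_def using P1
      by (intro power_less_imp_less_base[of c m P]) auto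
  qed
  have L2: "D < 1 \<Longrightarrow> (1 / real m) * log 2 (b^m / (1 - D)) < R \<longleftrightarrow> b^m / (1 - D) < M"
  proof -
    assume "D < 1"
    then have pos: "b^m / (1 - D) > 0" using bm by simp
    have "(1 / real m) * log 2 (b^m / (1 - D)) < R \<longleftrightarrow> log 2 (b^m / (1 - D)) < real m * R"
      using assms(3) by (simp add: field_simps)
    also have "\<dots> \<longleftrightarrow> b^m / (1 - D) < M"
      using pos by (subst log_less_iff) (auto simp: Mpow)
    finally show ?thesis .
  qed
  have rhsX: "\<bar>a\<bar> ^ m - delta_minus a e m = b^m" using dm by (simp add: A_def)
  have goal: "kappa a e m R < 1 \<longleftrightarrow> (D < 1 \<and> c^m < M \<and> b^m / (1 - D) < M)"
  proof (cases "M \<ge> 2")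
    case True
    have "kappa a e m R = b^m / M + D"
      unfolding kap using True M1 unfolding D_def dp dm
      by (simp add: max_def field_simps)
    moreover have "b^m / M + D < 1 \<longleftrightarrow> (D < 1 \<and> c^m < M \<and> b^m / (1 - D) < M)"
    proof
      assume h: "b^m / M + D < 1"
      have "b^m / M > 0" using bm M1 by simp
      then have D1: "D < 1" using h by simp
      have h2: "b^m < M * (1 - D)" using h M1 by (simp add: field_simps)
      have "D \<ge> 0" using D2 bmA by simp
      then have "M * D \<ge> 2 * D" using True by (simp add: mult_right_mono)
      then have "c^m < M" using h2 D2 by (simp add: algebra_simps)
      then show "D < 1 \<and> c^m < M \<and> b^m / (1 - D) < M" using D1 h2 by (simp add: field_simps)
    next
      assume h: "D < 1 \<and> c^m < M \<and> b^m / (1 - D) < M"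
      then have "b^m < M * (1 - D)" by (auto simp: pos_divide_less_eq mult.commute)
      then show "b^m / M + D < 1" using M1 by (simp add: field_simps)
    qed
    ultimately show ?thesis by simp
  next
    case False
    have "kappa a e m R = c^m / M"
      unfolding kap using False M1 unfolding dp
      by (simp add: max_def field_simps)
    moreover have "c^m / M < 1 \<longleftrightarrow> (D < 1 \<and> c^m < M \<and> b^m / (1 - D) < M)"
    proof
      assume "c^m / M < 1"
      then have h: "c^m < M" using M1 by (simp add: field_simps)
      have D0: "D \<ge> 0" using D2 bmA by simp
      have D1: "D < 1" using h False D2 bm by simp
      have "M * D \<le> 2 * D" using False D0 by (simp add: mult_right_mono)
      then have "b^m < M * (1 - D)" using h D2 by (simp add: algebra_simps)
      then show "D < 1 \<and> c^m < M \<and> b^m / (1 - D) < M" using D1 h by (simp add: field_simps)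
    next
      assume "D < 1 \<and> c^m < M \<and> b^m / (1 - D) < M"
      then show "c^m / M < 1" using M1 by (simp add: field_simps)
    qed
    ultimately show ?thesis by simp
  qed
  show ?thesis
    unfolding sq goal rhsX D_def[symmetric] A_def[symmetric] c_def[symmetric]
    using L1 cP L2 dm by auto
qed

end
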